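(* Let $L>0$, let $p,w\in C^2([0,L])$ be positive-valued functions with $p^{-1},w^{-1}\in L^\infty(]0,L[)$, and let $q\in C([0,L])$ be nonnegative-valued. Define $y(x)=\int_0^x\sqrt{w(s)/p(s)}\,ds$ for $x\in[0,L]$, $B=\int_0^L\sqrt{w(s)/p(s)}\,ds$, let $x(y)$ be the inverse of $y:[0,L]\to[0,B]$, and set $f(y)=(w(x(y))p(x(y)))^{1/4}$ and $Q(y)=f''(y)/f(y)+q(x(y))/w(x(y))$ for $y\in[0,B]$. For $\lambda>0$ define $$K_Qu(y)=\int_0^yQ(z)\sin(\sqrt\lambda(y-z))u(z)\,dz,\qquad y\in\,]0,B[,$$ and let $\|K_Q\|_t$ denote the operator norm of $K_Q$ as a map from $L^t(]0,B[)$ to $L^t(]0,B[)$. Then for every $\lambda>0$, $$\|K_Q\|_2^2\le\frac{B^2}{4}\|Q\|_\infty^2\qquad\text{and}\qquad \|K_Q\|_4^4\le\left(\frac{B^3}{12}+\frac{5B}{32\lambda}+\frac{5}{32\lambda^{3/2}}\right)\|Q\|_4^4 .$$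
   Context: $\|Q\|_\infty$ and $\|Q\|_4$ are the norms of $Q$ in $L^\infty(]0,B[)$ and $L^4(]0,B[)$ (Lebesgue measure). *)

theory Defs
  imports "HOL-Analysis.Analysis" "HOL-Probability.Essential_Supremum"
begin

definition C2_on :: "real \<Rightarrow> real \<Rightarrow> (real \<Rightarrow> real) \<Rightarrow> bool" where
  "C2_on a b f \<longleftrightarrow> (\<exists>f' f''.
      (\<forall>x\<in>{a..b}. (f has_real_derivative f' x) (at x within {a..b})) \<and>
      (\<forall>x\<in>{a..b}. (f' has_real_derivative f'' x) (at x within {a..b})) \<and>
      continuous_on {a..b} f'')"

definition Linf_norm :: "real set \<Rightarrow> (real \<Rightarrow> real) \<Rightarrow> ereal" where
  "Linf_norm S u = esssup (restrict_space lborel S) (\<lambda>x. ereal \<bar>u x\<bar>)"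

definition in_Lp :: "real \<Rightarrow> real set \<Rightarrow> (real \<Rightarrow> real) \<Rightarrow> bool" where
  "in_Lp t S u \<longleftrightarrow> u \<in> borel_measurable (restrict_space lborel S) \<and>
     set_integrable lborel S (\<lambda>x. \<bar>u x\<bar> powr t)"

definition Lp_norm :: "real \<Rightarrow> real set \<Rightarrow> (real \<Rightarrow> real) \<Rightarrow> real" where
  "Lp_norm t S u = (set_lebesgue_integral lborel S (\<lambda>x. \<bar>u x\<bar> powr t)) powr (1 / t)"

definition op_norm :: "real \<Rightarrow> real set \<Rightarrow> ((real \<Rightarrow> real) \<Rightarrow> (real \<Rightarrow> real)) \<Rightarrow> ereal" where
  "op_norm t S K = Sup {ereal (Lp_norm t S (K u) / Lp_norm t S u) | u.
                          in_Lp t S u \<and> Lp_norm t S u \<noteq> 0}"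

definition liou_y :: "(real \<Rightarrow> real) \<Rightarrow> (real \<Rightarrow> real) \<Rightarrow> real \<Rightarrow> real" where
  "liou_y p w x = integral {0..x} (\<lambda>s. sqrt (w s / p s))"

definition liou_x :: "real \<Rightarrow> (real \<Rightarrow> real) \<Rightarrow> (real \<Rightarrow> real) \<Rightarrow> real \<Rightarrow> real" where
  "liou_x L p w = inv_into {0..L} (liou_y p w)"

definition liou_f :: "real \<Rightarrow> (real \<Rightarrow> real) \<Rightarrow> (real \<Rightarrow> real) \<Rightarrow> real \<Rightarrow> real" where
  "liou_f L p w y = (w (liou_x L p w y) * p (liou_x L p w y)) powr (1/4)"

definition liou_Q :: "real \<Rightarrow> (real \<Rightarrow> real) \<Rightarrow> (real \<Rightarrow> real) \<Rightarrow> (real \<Rightarrow> real) \<Rightarrow> real \<Rightarrow> real" where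
  "liou_Q L p w q y = deriv (deriv (liou_f L p w)) y / liou_f L p w y
                      + q (liou_x L p w y) / w (liou_x L p w y)"

definition K_op :: "(real \<Rightarrow> real) \<Rightarrow> real \<Rightarrow> (real \<Rightarrow> real) \<Rightarrow> real \<Rightarrow> real" where
  "K_op Q lam u y = set_lebesgue_integral lborel {0..y} (\<lambda>z. Q z * sin (sqrt lam * (y - z)) * u z)"

end

theory Submission
  imports Defs
begin


definition C1 :: "real set \<Rightarrow> (real \<Rightarrow> real) \<Rightarrow> (real \<Rightarrow> real) \<Rightarrow> bool" where
  "C1 S f f' \<longleftrightarrow> (\<forall>x\<in>S. (f has_real_derivative f' x) (at x within S)) \<and> continuous_on S f'"

definition isC1 :: "real set \<Rightarrow> (real \<Rightarrow> real) \<Rightarrow> bool" where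
  "isC1 S f \<longleftrightarrow> (\<exists>f'. C1 S f f')"

definition isC2 :: "real set \<Rightarrow> (real \<Rightarrow> real) \<Rightarrow> bool" where
  "isC2 S f \<longleftrightarrow> (\<exists>f'. (\<forall>x\<in>S. (f has_real_derivative f' x) (at x within S)) \<and> isC1 S f')"

lemma deriv_cont:
  assumes "\<forall>x\<in>S. (f has_real_derivative f' x) (at x within S)"
  shows "continuous_on S f"
  using assms by (metis DERIV_continuous continuous_on_eq_continuous_within)

lemma isC1_cont: "isC1 S f \<Longrightarrow> continuous_on S f"
  unfolding isC1_def C1_def using deriv_cont by blast

lemma isC2_C1: "isC2 S f \<Longrightarrow> isC1 S f"
proof -
  assume "isC2 S f"
  then obtain f' where "\<forall>x\<in>S. (f has_real_derivative f' x) (at x within S)" "isC1 S f'"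
    unfolding isC2_def by blast
  moreover from this(2) have "continuous_on S f'" by (rule isC1_cont)
  ultimately show ?thesis unfolding isC1_def C1_def by blast
qed

lemma powr_chain:
  assumes "(f has_real_derivative d) (at x within S)" "f x > 0"
  shows "((\<lambda>x. f x powr r) has_real_derivative r * f x powr (r - 1) * d) (at x within S)"
proof -
  have "((\<lambda>z. z powr r) has_real_derivative r * f x powr (r - 1)) (at (f x))"
    using assms(2) by (rule has_real_derivative_powr)
  from DERIV_chain2[OF this assms(1)] show ?thesis by simp
qed

lemma isC1_const: "isC1 S (\<lambda>x. c)"
  unfolding isC1_def C1_def
  by (rule exI[of _ "\<lambda>x. 0"]) (auto intro: derivative_eq_intros)

lemma isC1_add: "isC1 S f \<Longrightarrow> isC1 S g \<Longrightarrow> isC1 S (\<lambda>x. f x + g x)"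
  unfolding isC1_def C1_def
  apply clarify
  subgoal for f' g'
    by (rule exI[of _ "\<lambda>x. f' x + g' x"]) (auto intro!: derivative_eq_intros continuous_intros)
  done

lemma isC1_mult: "isC1 S f \<Longrightarrow> isC1 S g \<Longrightarrow> isC1 S (\<lambda>x. f x * g x)"
proof -
  assume a: "isC1 S f" "isC1 S g"
  then have cf: "continuous_on S f" and cg: "continuous_on S g" using isC1_cont by auto
  from a obtain f' g' where "C1 S f f'" "C1 S g g'" unfolding isC1_def by blast
  then show ?thesis unfolding isC1_def C1_def
    by (intro exI[of _ "\<lambda>x. f' x * g x + f x * g' x"])
       (auto intro!: derivative_eq_intros continuous_intros cf cg)
qed

lemma isC1_powr: "isC1 S f \<Longrightarrow> \<forall>x\<in>S. f x > 0 \<Longrightarrow> isC1 S (\<lambda>x. f x powr r)"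
proof -
  assume a: "isC1 S f" and pos: "\<forall>x\<in>S. f x > 0"
  then have cf: "continuous_on S f" using isC1_cont by auto
  from a obtain f' where f': "C1 S f f'" unfolding isC1_def by blast
  have "C1 S (\<lambda>x. f x powr r) (\<lambda>x. r * f x powr (r - 1) * f' x)"
    unfolding C1_def
  proof (intro conjI ballI)
    fix x assume x: "x \<in> S"
    have "((\<lambda>x. f x powr r) has_real_derivative r * f x powr (r - 1) * f' x) (at x within S)"
      using powr_chain f' x pos unfolding C1_def by auto
    then show "((\<lambda>x. f x powr r) has_real_derivative r * f x powr (r - 1) * f' x) (at x within S)" .
  next
    show "continuous_on S (\<lambda>x. r * f x powr (r - 1) * f' x)"
      using f' pos cf unfolding C1_def
      by (intro continuous_intros) auto
  qed
  then show ?thesis unfolding isC1_def by blast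
qed

lemma isC2_mult: "isC2 S f \<Longrightarrow> isC2 S g \<Longrightarrow> isC2 S (\<lambda>x. f x * g x)"
proof -
  assume a: "isC2 S f" "isC2 S g"
  then have cf: "isC1 S f" and cg: "isC1 S g" using isC2_C1 by auto
  from a obtain f' g' where f': "\<forall>x\<in>S. (f has_real_derivative f' x) (at x within S)" "isC1 S f'"
    and g': "\<forall>x\<in>S. (g has_real_derivative g' x) (at x within S)" "isC1 S g'"
    unfolding isC2_def by blast
  show ?thesis unfolding isC2_def
    apply (intro exI[of _ "\<lambda>x. f' x * g x + f x * g' x"] conjI)
    using f' g' apply (auto intro!: derivative_eq_intros)[1]
    using f' g' cf cg by (intro isC1_add isC1_mult)
qed

lemma isC2_powr: "isC2 S f \<Longrightarrow> \<forall>x\<in>S. f x > 0 \<Longrightarrow> isC2 S (\<lambda>x. f x powr r)"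
proof -
  assume a: "isC2 S f" and pos: "\<forall>x\<in>S. f x > 0"
  then have cf: "isC1 S f" using isC2_C1 by auto
  from a obtain f' where f': "\<forall>x\<in>S. (f has_real_derivative f' x) (at x within S)" "isC1 S f'"
    unfolding isC2_def by blast
  show ?thesis unfolding isC2_def
  proof (intro exI[of _ "\<lambda>x. r * f x powr (r - 1) * f' x"] conjI ballI)
    fix x assume x: "x \<in> S"
    show "((\<lambda>x. f x powr r) has_real_derivative r * f x powr (r - 1) * f' x) (at x within S)"
      using powr_chain f' x pos by auto
  next
    show "isC1 S (\<lambda>x. r * f x powr (r - 1) * f' x)"
      by (intro isC1_mult isC1_const isC1_powr cf f' pos)
  qed
qed

lemma C2_on_isC2: "C2_on a b f \<Longrightarrow> isC2 {a..b} f"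
  unfolding C2_on_def isC2_def isC1_def C1_def by blast




lemma liou_change:
  fixes L :: real and p w :: "real \<Rightarrow> real"
  assumes L: "L > 0" and p2: "isC2 {0..L} p" and w2: "isC2 {0..L} w"
    and ppos: "\<forall>x\<in>{0..L}. p x > 0" and wpos: "\<forall>x\<in>{0..L}. w x > 0"
  defines "B \<equiv> integral {0..L} (\<lambda>s. sqrt (w s / p s))"
    and "ginv \<equiv> (\<lambda>x. (w x * p x powr (-1)) powr (-1/2))"
  shows "B > 0" "continuous_on {0..B} (liou_x L p w)"
    "\<forall>y\<in>{0..B}. liou_x L p w y \<in> {0..L}"
    "\<forall>y\<in>{0<..<B}. liou_x L p w y \<in> {0<..<L}"
    "isC1 {0..L} ginv" "\<forall>x\<in>{0..L}. ginv x > 0"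
    "\<forall>y\<in>{0<..<B}. (liou_x L p w has_real_derivative ginv (liou_x L p w y)) (at y)"
proof -
  define S where "S = {0..L::real}"
  define Y where "Y = liou_y p w"
  define X where "X = liou_x L p w"
  define g where "g = (\<lambda>s. sqrt (w s / p s))"
  have cp: "continuous_on S p" and cw: "continuous_on S w"
    using p2 w2 isC2_C1 isC1_cont unfolding S_def by auto
  have cg: "continuous_on S g" unfolding g_def
    using cp cw ppos by (intro continuous_intros) (auto simp: S_def)
  have gpos: "\<forall>x\<in>S. g x > 0" unfolding g_def S_def using ppos wpos by auto
  have Yder: "\<forall>x\<in>S. (Y has_real_derivative g x) (at x within S)"
    unfolding Y_def liou_y_def S_def g_def
    using integral_has_real_derivative cg unfolding S_def g_def by blast
  have cY: "continuous_on S Y" using deriv_cont[OF Yder] .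
  have Yder_int: "(Y has_real_derivative g x) (at x)" if "x \<in> {0<..<L}" for x
  proof -
    have "x \<in> interior S" unfolding S_def using that by auto
    then have "at x within S = at x" by (rule at_within_interior)
    moreover have "(Y has_real_derivative g x) (at x within S)" using Yder that unfolding S_def by auto
    ultimately show ?thesis by simp
  qed
  have Ylt: "Y a < Y b" if "0 \<le> a" "a < b" "b \<le> L" for a b
  proof (rule DERIV_pos_imp_increasing_open[OF \<open>a < b\<close>])
    fix x assume "a < x" "x < b"
    then have "x \<in> {0<..<L}" "x \<in> S" using that unfolding S_def by auto
    then show "\<exists>y. (Y has_real_derivative y) (at x) \<and> 0 < y"
      using Yder_int gpos by blast
  next
    show "continuous_on {a..b} Y" using cY by (rule continuous_on_subset) (use that in \<open>auto simp: S_def\<close>)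
  qed
  have Y0: "Y 0 = 0" unfolding Y_def liou_y_def by simp
  have YL: "Y L = B" unfolding Y_def liou_y_def B_def by simp
  show Bpos: "B > 0" using Ylt[of 0 L] L Y0 YL by auto
  have injY: "inj_on Y S"
  proof (rule inj_onI)
    fix a b assume "a \<in> S" "b \<in> S" "Y a = Y b"
    then show "a = b" using Ylt[of a b] Ylt[of b a] unfolding S_def
      by (cases a b rule: linorder_cases) auto
  qed
  have imY: "Y ` S = {0..B}"
  proof
    show "Y ` S \<subseteq> {0..B}"
    proof
      fix z assume "z \<in> Y ` S"
      then obtain x where x: "x \<in> S" "z = Y x" by auto
      have "Y 0 \<le> Y x" using Ylt[of 0 x] x unfolding S_def by (cases "x = 0") auto
      moreover have "Y x \<le> Y L" using Ylt[of x L] x unfolding S_def by (cases "x = L") auto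
      ultimately show "z \<in> {0..B}" using x Y0 YL by auto
    qed
  next
    show "{0..B} \<subseteq> Y ` S"
    proof
      fix z assume "z \<in> {0..B}"
      then obtain x where "x \<ge> 0" "x \<le> L" "Y x = z"
        using IVT'[of Y 0 z L] Y0 YL cY L unfolding S_def by auto
      then show "z \<in> Y ` S" unfolding S_def by auto
    qed
  qed
  have XY: "\<forall>x\<in>S. X (Y x) = x" unfolding X_def liou_x_def Y_def S_def
    using injY unfolding S_def Y_def by auto
  have YX: "\<forall>y\<in>{0..B}. Y (X y) = y \<and> X y \<in> S"
    unfolding X_def liou_x_def using imY
    by (metis S_def Y_def f_inv_into_f inv_into_into)
  show cX: "continuous_on {0..B} (liou_x L p w)"
    using continuous_on_inv[OF cY _ XY] imY unfolding S_def X_def by auto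
  show "\<forall>y\<in>{0..B}. liou_x L p w y \<in> {0..L}" using YX unfolding S_def X_def by auto
  have Xint: "X y \<in> {0<..<L}" if "y \<in> {0<..<B}" for y
  proof -
    have "X y \<in> S" "Y (X y) = y" using YX that by auto
    moreover have "X y \<noteq> 0" using Y0 calculation that by auto
    moreover have "X y \<noteq> L" using YL calculation that by auto
    ultimately show ?thesis unfolding S_def by auto
  qed
  then show "\<forall>y\<in>{0<..<B}. liou_x L p w y \<in> {0<..<L}" unfolding X_def by auto
  have ginv_eq: "ginv x = inverse (g x)" if "x \<in> S" for x
  proof -
    have "w x > 0" "p x > 0" using that ppos wpos unfolding S_def by auto
    have "p x powr (-1) = inverse (p x)" using \<open>p x > 0\<close> by (simp add: powr_minus)
    then have e1: "w x * p x powr (-1) = w x / p x" by (simp add: divide_inverse)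
    have "(w x / p x) powr (-(1/2)) = inverse ((w x / p x) powr (1/2))"
      by (rule powr_minus)
    also have "(w x / p x) powr (1/2) = sqrt (w x / p x)"
      using \<open>w x > 0\<close> \<open>p x > 0\<close> by (simp add: powr_half_sqrt)
    finally have e2: "(w x / p x) powr (-1/2) = inverse (sqrt (w x / p x))" by simp
    have "ginv x = (w x * p x powr (-1)) powr (-1/2)" by (simp only: ginv_def)
    also have "\<dots> = (w x / p x) powr (-1/2)" by (simp only: e1)
    also have "\<dots> = inverse (g x)" by (simp only: e2 g_def)
    finally show ?thesis .
  qed
  show "isC1 {0..L} ginv" unfolding ginv_def
    using p2 w2 ppos wpos isC2_C1
    by (intro isC1_powr isC1_mult) (auto intro!: mult_pos_pos)
  show "\<forall>x\<in>{0..L}. ginv x > 0" unfolding ginv_def using ppos wpos by auto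
  show "\<forall>y\<in>{0<..<B}. (liou_x L p w has_real_derivative ginv (liou_x L p w y)) (at y)"
  proof
    fix y assume y: "y \<in> {0<..<B}"
    have x0: "X y \<in> {0<..<L}" using Xint y by auto
    have Xder: "(X has_real_derivative inverse (g (X y))) (at y)"
    proof (rule DERIV_inverse_function[where a=0 and b=B])
      show "(Y has_real_derivative g (X y)) (at (X y))" using Yder_int x0 by auto
      have "X y \<in> S" using x0 unfolding S_def by auto
      then have "g (X y) > 0" using gpos by blast
      then show "g (X y) \<noteq> 0" by simp
      show "0 < y" "y < B" using y by auto
      show "\<And>z. 0 < z \<Longrightarrow> z < B \<Longrightarrow> Y (X z) = z" using YX by auto
      show "isCont X y" using cX y unfolding X_def
        by (metis atLeastAtMost_iff continuous_on_interior greaterThanLessThan_iff interior_atLeastAtMost_real)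
    qed
    moreover have "inverse (g (X y)) = ginv (X y)" using ginv_eq[of "X y"] x0 unfolding S_def by auto
    ultimately show "(liou_x L p w has_real_derivative ginv (liou_x L p w y)) (at y)"
      unfolding X_def by simp
  qed
qed

lemma chain_X:
  fixes \<phi> \<phi>' X ginv :: "real \<Rightarrow> real"
  assumes phi: "\<forall>x\<in>{0..L}. (\<phi> has_real_derivative \<phi>' x) (at x within {0..L})"
    and X: "(X has_real_derivative ginv (X y)) (at y)" and x0: "X y \<in> {0<..<L}"
  shows "((\<lambda>y. \<phi> (X y)) has_real_derivative \<phi>' (X y) * ginv (X y)) (at y)"
proof -
  have d1: "(\<phi> has_real_derivative \<phi>' (X y)) (at (X y))"
  proof -
    have "X y \<in> interior {0..L}" using x0 by auto
    then have "at (X y) within {0..L} = at (X y)" by (rule at_within_interior)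
    moreover have "(\<phi> has_real_derivative \<phi>' (X y)) (at (X y) within {0..L})" using phi x0 by auto
    ultimately show ?thesis by simp
  qed
  show ?thesis by (rule DERIV_chain2[of \<phi> "\<phi>' (X y)" X y, OF d1 X])
qed



lemma Q_regular:
  fixes L :: real and p w q :: "real \<Rightarrow> real"
  assumes L: "L > 0" and "C2_on 0 L p" and "C2_on 0 L w"
    and ppos: "\<forall>x\<in>{0..L}. p x > 0" and wpos: "\<forall>x\<in>{0..L}. w x > 0"
    and cq: "continuous_on {0..L} q"
  defines "B \<equiv> integral {0..L} (\<lambda>s. sqrt (w s / p s))"
  shows "B > 0" "\<exists>Qc. continuous_on {0..B} Qc \<and> (\<forall>y\<in>{0<..<B}. liou_Q L p w q y = Qc y)"
proof -
  have p2: "isC2 {0..L} p" and w2: "isC2 {0..L} w" using assms C2_on_isC2 by auto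
  define ginv where "ginv = (\<lambda>x. (w x * p x powr (-1)) powr (-1/2))"
  define X where "X = liou_x L p w"
  note lc = liou_change[OF L p2 w2 ppos wpos, folded B_def ginv_def X_def]
  show "B > 0" using lc(1) .
  define h where "h = (\<lambda>x. (w x * p x) powr (1/4))"
  have hpos: "\<forall>x\<in>{0..L}. h x > 0" unfolding h_def using ppos wpos by auto
  have "isC2 {0..L} h" unfolding h_def using ppos wpos
    by (intro isC2_powr isC2_mult w2 p2) auto
  then obtain h' where h': "\<forall>x\<in>{0..L}. (h has_real_derivative h' x) (at x within {0..L})" "isC1 {0..L} h'"
    unfolding isC2_def by blast
  define F1 where "F1 = (\<lambda>x. h' x * ginv x)"
  have "isC1 {0..L} F1" unfolding F1_def by (intro isC1_mult h' lc(5))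
  then obtain F1' where F1': "\<forall>x\<in>{0..L}. (F1 has_real_derivative F1' x) (at x within {0..L})"
     "continuous_on {0..L} F1'" unfolding isC1_def C1_def by blast
  have Xd: "(X has_real_derivative ginv (X z)) (at z)" if "z \<in> {0<..<B}" for z
    using lc(7) that unfolding ginv_def by blast
  have Xin: "X z \<in> {0<..<L}" if "z \<in> {0<..<B}" for z
    using lc(4) that by blast
  have fX: "liou_f L p w = (\<lambda>y. h (X y))" unfolding liou_f_def h_def X_def by auto
  have d2: "deriv (deriv (liou_f L p w)) y = F1' (X y) * ginv (X y)" if y: "y \<in> {0<..<B}" for y
  proof -
    have der1: "deriv (liou_f L p w) z = F1 (X z)" if z: "z \<in> {0<..<B}" for z
    proof -
      have "((\<lambda>y. h (X y)) has_real_derivative h' (X z) * ginv (X z)) (at z)"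
        using chain_X[where \<phi>=h and \<phi>'=h' and X=X and ginv=ginv and y=z and L=L, OF h'(1) Xd[OF z] Xin[OF z]] .
      then show ?thesis unfolding fX F1_def by (rule DERIV_imp_deriv)
    qed
    have "((\<lambda>y. F1 (X y)) has_real_derivative F1' (X y) * ginv (X y)) (at y)"
      using chain_X[where \<phi>=F1 and \<phi>'=F1' and X=X and ginv=ginv and y=y and L=L, OF F1'(1) Xd[OF y] Xin[OF y]] .
    then have "(deriv (liou_f L p w) has_real_derivative F1' (X y) * ginv (X y)) (at y)"
      by (rule has_field_derivative_transform_within_open[where S="{0<..<B}"])
         (use y der1 in auto)
    then show ?thesis by (rule DERIV_imp_deriv)
  qed
  define G where "G = (\<lambda>x. F1' x * ginv x / h x + q x / w x)"
  have cG: "continuous_on {0..L} G" unfolding G_def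
    using F1'(2) isC1_cont[OF lc(5)] isC1_cont[OF isC2_C1[OF \<open>isC2 {0..L} h\<close>]] cq hpos wpos
      isC1_cont[OF isC2_C1[OF w2]]
    by (intro continuous_intros) auto
  have cQc: "continuous_on {0..B} (\<lambda>y. G (X y))"
    by (rule continuous_on_compose2[OF cG lc(2)]) (use lc(3) in auto)
  have "\<forall>y\<in>{0<..<B}. liou_Q L p w q y = G (X y)"
  proof
    fix y assume y: "y \<in> {0<..<B}"
    show "liou_Q L p w q y = G (X y)"
      unfolding liou_Q_def d2[OF y] G_def
      by (simp add: fX X_def)
  qed
  then show "\<exists>Qc. continuous_on {0..B} Qc \<and> (\<forall>y\<in>{0<..<B}. liou_Q L p w q y = Qc y)"
    using cQc by blast
qed



lemma CS_real:
  fixes f g :: "'a \<Rightarrow> real"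
  assumes [measurable]: "f \<in> borel_measurable M" "g \<in> borel_measurable M"
    and "\<And>x. f x \<ge> 0" "\<And>x. g x \<ge> 0"
  shows "(\<integral>\<^sup>+ x. ennreal (f x * g x) \<partial>M)^2 \<le> (\<integral>\<^sup>+ x. ennreal (f x ^ 2) \<partial>M) * (\<integral>\<^sup>+ x. ennreal (g x ^ 2) \<partial>M)"
proof -
  have "(\<integral>\<^sup>+ x. ennreal (f x) * ennreal (g x) \<partial>M)^2 \<le> (\<integral>\<^sup>+ x. ennreal (f x) ^ 2 \<partial>M) * (\<integral>\<^sup>+ x. ennreal (g x) ^ 2 \<partial>M)"
    by (rule Cauchy_Schwarz_nn_integral) auto
  then show ?thesis using assms(3,4) by (simp add: ennreal_mult ennreal_power)
qed

lemma sin_sq_integral: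
  fixes a y :: real
  assumes "a > 0" "y \<ge> 0"
  shows "((\<lambda>z. (sin (a * (y - z)))^2) has_integral (y/2 - sin (2*a*y) / (4*a))) {0..y}"
proof -
  define F where "F = (\<lambda>z::real. z/2 + sin (2*a*(y - z)) / (4*a))"
  have "((\<lambda>z. (sin (a * (y - z)))^2) has_integral (F y - F 0)) {0..y}"
  proof (rule fundamental_theorem_of_calculus[OF assms(2)])
    fix z assume "z \<in> {0..y}"
    have "(F has_real_derivative (1/2 + cos (2*a*(y - z)) * (- (2*a)) / (4*a))) (at z)"
      unfolding F_def by (auto intro!: derivative_eq_intros)
    moreover have "1/2 + cos (2*a*(y - z)) * (- (2*a)) / (4*a) = (sin (a * (y - z)))^2"
    proof -
      have "cos (2*a*(y - z)) = 1 - 2 * (sin (a * (y - z)))^2"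
        using cos_double_sin[of "a * (y - z)"] by (simp add: mult.assoc)
      then show ?thesis using assms(1) by (simp add: field_simps)
    qed
    ultimately show "(F has_vector_derivative (sin (a * (y - z)))^2) (at z within {0..y})"
      by (simp add: has_real_derivative_iff_has_vector_derivative[symmetric] has_field_derivative_at_within)
  qed
  moreover have "F y - F 0 = y/2 - sin (2*a*y) / (4*a)" unfolding F_def by simp
  ultimately show ?thesis by simp
qed

lemma S_integral:
  fixes a B :: real
  assumes "a > 0" "B \<ge> 0"
  shows "((\<lambda>y. y/2 - sin (2*a*y) / (4*a)) has_integral (B^2/4 + cos (2*a*B) / (8*a^2) - 1/(8*a^2))) {0..B}"
proof -
  define F where "F = (\<lambda>y::real. y^2/4 + cos (2*a*y) / (8*a^2))"
  have "((\<lambda>y. y/2 - sin (2*a*y) / (4*a)) has_integral (F B - F 0)) {0..B}"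
  proof (rule fundamental_theorem_of_calculus[OF assms(2)])
    fix z assume "z \<in> {0..B}"
    have "(F has_real_derivative (2 * z / 4 + (- sin (2*a*z)) * (2*a) / (8*a^2))) (at z)"
      unfolding F_def using assms(1) by (auto intro!: derivative_eq_intros simp: field_simps eval_nat_numeral)
    moreover have "2 * z / 4 + (- sin (2*a*z)) * (2*a) / (8*a^2) = z/2 - sin (2*a*z) / (4*a)"
      using assms(1) by (simp add: field_simps power2_eq_square)
    ultimately show "(F has_vector_derivative z/2 - sin (2*a*z) / (4*a)) (at z within {0..B})"
      by (simp add: has_real_derivative_iff_has_vector_derivative[symmetric] has_field_derivative_at_within)
  qed
  moreover have "F B - F 0 = B^2/4 + cos (2*a*B) / (8*a^2) - 1/(8*a^2)" unfolding F_def by simp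
  ultimately show ?thesis by simp
qed

lemma S2_integral:
  fixes a B :: real
  assumes "a > 0" "B \<ge> 0"
  defines "F \<equiv> (\<lambda>y::real. y^3/12 + y * cos (2*a*y) / (8*a^2) - sin (2*a*y) / (16*a^3) + y / (32*a^2) - sin (4*a*y) / (128*a^3))"
  shows "((\<lambda>y. (y/2 - sin (2*a*y) / (4*a))^2) has_integral F B) {0..B}"
proof -
  have "((\<lambda>y. (y/2 - sin (2*a*y) / (4*a))^2) has_integral (F B - F 0)) {0..B}"
  proof (rule fundamental_theorem_of_calculus[OF assms(2)])
    fix z assume "z \<in> {0..B}"
    have "(F has_real_derivative (3 * z^2 / 12 + (cos (2*a*z) + z * (- sin (2*a*z) * (2*a))) / (8*a^2)
        - cos (2*a*z) * (2*a) / (16*a^3) + 1 / (32*a^2) - cos (4*a*z) * (4*a) / (128*a^3))) (at z)"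
      unfolding F_def using assms(1) by (auto intro!: derivative_eq_intros simp: field_simps eval_nat_numeral)
    moreover have "3 * z^2 / 12 + (cos (2*a*z) + z * (- sin (2*a*z) * (2*a))) / (8*a^2)
        - cos (2*a*z) * (2*a) / (16*a^3) + 1 / (32*a^2) - cos (4*a*z) * (4*a) / (128*a^3)
        = (z/2 - sin (2*a*z) / (4*a))^2"
    proof -
      have c4: "cos (4*a*z) = 1 - 2 * (sin (2*a*z))^2"
        using cos_double_sin[of "2*a*z"] by (simp add: mult.assoc)
      show ?thesis unfolding c4 using assms(1)
        by (simp add: field_simps power2_eq_square power3_eq_cube)
    qed
    ultimately show "(F has_vector_derivative (z/2 - sin (2*a*z) / (4*a))^2) (at z within {0..B})"
      by (simp add: has_real_derivative_iff_has_vector_derivative[symmetric] has_field_derivative_at_within)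
  qed
  moreover have "F 0 = 0" unfolding F_def by simp
  ultimately show ?thesis by simp
qed

lemma S2_bound:
  fixes a B :: real
  assumes "a > 0" "B \<ge> 0"
  shows "B^3/12 + B * cos (2*a*B) / (8*a^2) - sin (2*a*B) / (16*a^3) + B / (32*a^2) - sin (4*a*B) / (128*a^3)
    \<le> B^3/12 + 5 * B / (32 * a^2) + 5 / (32 * a^3)"
proof -
  have a2: "a^2 > 0" "a^3 > 0" using assms by auto
  have "B * cos (2*a*B) / (8*a^2) \<le> B / (8*a^2)"
    using a2 assms by (intro divide_right_mono) (auto intro: mult_left_le)
  moreover have "- sin (2*a*B) / (16*a^3) \<le> 1 / (16*a^3)"
    using a2 by (intro divide_right_mono) (use abs_sin_le_one[of "2*a*B"] in \<open>auto simp: abs_le_iff\<close>)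
  moreover have "- sin (4*a*B) / (128*a^3) \<le> 1 / (128*a^3)"
    using a2 by (intro divide_right_mono) (use abs_sin_le_one[of "4*a*B"] in \<open>auto simp: abs_le_iff\<close>)
  moreover have "B / (8*a^2) + B / (32*a^2) = 5 * B / (32 * a^2)" using a2 by (simp add: field_simps)
  moreover have "1 / (16*a^3) + 1 / (128*a^3) \<le> 5 / (32 * a^3)" using a2 by (simp add: field_simps)
  ultimately show ?thesis by linarith
qed



lemma S_nonneg:
  fixes a y :: real assumes "a > 0" "y \<ge> 0"
  shows "y/2 - sin (2*a*y) / (4*a) \<ge> 0"
  using has_integral_nonneg[OF sin_sq_integral[OF assms]] by auto

lemma pw2:
  fixes ut :: "real \<Rightarrow> real" and a y :: real
  assumes [measurable]: "ut \<in> borel_measurable lborel" and a: "a > 0" "y \<ge> 0"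
  shows "(\<integral>\<^sup>+ z. ennreal (indicator {0..y} z * \<bar>sin (a*(y-z))\<bar> * \<bar>ut z\<bar>) \<partial>lborel)^2
     \<le> (\<integral>\<^sup>+ z. ennreal (indicator {0..y} z * ut z ^ 2) \<partial>lborel) * ennreal (y/2 - sin (2*a*y) / (4*a))"
proof -
  let ?I = "indicator {0..y} :: real \<Rightarrow> real"
  define F where "F = (\<lambda>z. ?I z * \<bar>ut z\<bar>)"
  define G where "G = (\<lambda>z. ?I z * \<bar>sin (a*(y-z))\<bar>)"
  have [measurable]: "F \<in> borel_measurable lborel" "G \<in> borel_measurable lborel"
    unfolding F_def G_def by measurable
  have e1: "(\<integral>\<^sup>+ z. ennreal (?I z * \<bar>sin (a*(y-z))\<bar> * \<bar>ut z\<bar>) \<partial>lborel) = (\<integral>\<^sup>+ z. ennreal (F z * G z) \<partial>lborel)"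
    unfolding F_def G_def by (rule nn_integral_cong) (simp split: split_indicator)
  have cs: "(\<integral>\<^sup>+ z. ennreal (F z * G z) \<partial>lborel)^2 \<le> (\<integral>\<^sup>+ z. ennreal (F z ^ 2) \<partial>lborel) * (\<integral>\<^sup>+ z. ennreal (G z ^ 2) \<partial>lborel)"
    by (rule CS_real) (auto simp: F_def G_def)
  have e2: "(\<integral>\<^sup>+ z. ennreal (F z ^ 2) \<partial>lborel) = (\<integral>\<^sup>+ z. ennreal (?I z * ut z ^ 2) \<partial>lborel)"
    unfolding F_def by (rule nn_integral_cong) (simp split: split_indicator)
  have e3: "(\<integral>\<^sup>+ z. ennreal (G z ^ 2) \<partial>lborel) = (\<integral>\<^sup>+ z. ennreal (?I z * (sin (a*(y-z)))^2) \<partial>lborel)"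
    unfolding G_def by (rule nn_integral_cong) (simp split: split_indicator)
  also have "\<dots> = ennreal (y/2 - sin (2*a*y) / (4*a))"
    by (rule nn_integral_has_integral_lebesgue[OF _ sin_sq_integral[OF a]]) auto
  finally show ?thesis using cs e1 e2 by simp
qed

lemma pw4:
  fixes Qt ut :: "real \<Rightarrow> real" and a y :: real
  assumes [measurable]: "Qt \<in> borel_measurable lborel" "ut \<in> borel_measurable lborel" and a: "a > 0" "y \<ge> 0"
  shows "(\<integral>\<^sup>+ z. ennreal (indicator {0..y} z * \<bar>Qt z\<bar> * \<bar>sin (a*(y-z))\<bar> * \<bar>ut z\<bar>) \<partial>lborel)^4
     \<le> (\<integral>\<^sup>+ z. ennreal (indicator {0..y} z * Qt z ^ 4) \<partial>lborel) * (\<integral>\<^sup>+ z. ennreal (indicator {0..y} z * ut z ^ 4) \<partial>lborel)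
        * ennreal ((y/2 - sin (2*a*y) / (4*a))^2)"
proof -
  let ?I = "indicator {0..y} :: real \<Rightarrow> real"
  define F where "F = (\<lambda>z. ?I z * \<bar>Qt z\<bar> * \<bar>ut z\<bar>)"
  define G where "G = (\<lambda>z. ?I z * \<bar>sin (a*(y-z))\<bar>)"
  define F1 where "F1 = (\<lambda>z. ?I z * Qt z ^ 2)"
  define F2 where "F2 = (\<lambda>z. ?I z * ut z ^ 2)"
  have [measurable]: "F \<in> borel_measurable lborel" "G \<in> borel_measurable lborel"
    "F1 \<in> borel_measurable lborel" "F2 \<in> borel_measurable lborel"
    unfolding F_def G_def F1_def F2_def by measurable
  define X where "X = (\<integral>\<^sup>+ z. ennreal (F z * G z) \<partial>lborel)"
  define A where "A = (\<integral>\<^sup>+ z. ennreal (F z ^ 2) \<partial>lborel)"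
  define C where "C = (\<integral>\<^sup>+ z. ennreal (G z ^ 2) \<partial>lborel)"
  have e1: "(\<integral>\<^sup>+ z. ennreal (?I z * \<bar>Qt z\<bar> * \<bar>sin (a*(y-z))\<bar> * \<bar>ut z\<bar>) \<partial>lborel) = X"
    unfolding F_def G_def X_def by (rule nn_integral_cong) (simp split: split_indicator)
  have cs: "X^2 \<le> A * C" unfolding X_def A_def C_def
    by (rule CS_real) (auto simp: F_def G_def)
  have e2: "A = (\<integral>\<^sup>+ z. ennreal (F1 z * F2 z) \<partial>lborel)"
    unfolding A_def F_def F1_def F2_def by (rule nn_integral_cong) (simp split: split_indicator add: power_mult_distrib)
  have cs2: "A^2 \<le> (\<integral>\<^sup>+ z. ennreal (F1 z ^ 2) \<partial>lborel) * (\<integral>\<^sup>+ z. ennreal (F2 z ^ 2) \<partial>lborel)"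
    unfolding e2 by (rule CS_real) (auto simp: F1_def F2_def)
  have e3: "(\<integral>\<^sup>+ z. ennreal (F1 z ^ 2) \<partial>lborel) = (\<integral>\<^sup>+ z. ennreal (?I z * Qt z ^ 4) \<partial>lborel)"
    unfolding F1_def by (rule nn_integral_cong) (simp split: split_indicator add: power_mult_distrib flip: power_mult)
  have e4: "(\<integral>\<^sup>+ z. ennreal (F2 z ^ 2) \<partial>lborel) = (\<integral>\<^sup>+ z. ennreal (?I z * ut z ^ 4) \<partial>lborel)"
    unfolding F2_def by (rule nn_integral_cong) (simp split: split_indicator add: power_mult_distrib flip: power_mult)
  have "C = (\<integral>\<^sup>+ z. ennreal (?I z * (sin (a*(y-z)))^2) \<partial>lborel)"
    unfolding C_def G_def by (rule nn_integral_cong) (simp split: split_indicator)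
  also have "\<dots> = ennreal (y/2 - sin (2*a*y) / (4*a))"
    by (rule nn_integral_has_integral_lebesgue[OF _ sin_sq_integral[OF a]]) auto
  finally have eC: "C = ennreal (y/2 - sin (2*a*y) / (4*a))" .
  have "X^4 = (X^2)^2" by (simp flip: power_mult)
  also have "\<dots> \<le> (A * C)^2" by (rule power_mono[OF cs]) simp
  also have "\<dots> = A^2 * C^2" by (simp add: power_mult_distrib)
  also have "\<dots> \<le> ((\<integral>\<^sup>+ z. ennreal (?I z * Qt z ^ 4) \<partial>lborel) * (\<integral>\<^sup>+ z. ennreal (?I z * ut z ^ 4) \<partial>lborel)) * C^2"
    by (rule mult_right_mono) (use cs2 e3 e4 in auto)
  also have "C^2 = ennreal ((y/2 - sin (2*a*y) / (4*a))^2)"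
    unfolding eC using S_nonneg[OF a] by (simp add: ennreal_power)
  finally show ?thesis using e1 by simp
qed



lemma set_int_nonneg:
  fixes f :: "real \<Rightarrow> real"
  assumes "\<forall>x\<in>A. f x \<ge> 0"
  shows "set_lebesgue_integral M A f \<ge> 0"
  unfolding set_lebesgue_integral_def
  by (rule Bochner_Integration.integral_nonneg) (use assms in \<open>auto simp: indicator_def\<close>)

lemma powr_inv_pow:
  fixes x :: real assumes "x \<ge> 0" "n > 0"
  shows "(x powr (1 / real n)) ^ n = x"
proof (cases "x = 0")
  case True then show ?thesis using assms by simp
next
  case False
  then have "x > 0" using assms by simp
  then have "(x powr (1 / real n)) ^ n = (x powr (1 / real n)) powr real n"
    by (simp add: powr_realpow)
  also have "\<dots> = x" using assms \<open>x > 0\<close> by (simp add: powr_powr)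
  finally show ?thesis .
qed

lemma abs_powr_num:
  fixes x :: real assumes "n > 0"
  shows "\<bar>x\<bar> powr real n = x ^ n \<or> (odd n)"
proof (cases "x = 0")
  case True then show ?thesis using assms by simp
next
  case False
  then have "\<bar>x\<bar> powr real n = \<bar>x\<bar> ^ n" by (simp add: powr_realpow)
  then show ?thesis by (auto simp: power_even_abs)
qed

lemma abs_powr4: "\<bar>x::real\<bar> powr 4 = x ^ 4"
  using abs_powr_num[where x=x and n=4] by simp

lemma abs_powr2: "\<bar>x::real\<bar> powr 2 = x ^ 2"
  using abs_powr_num[where x=x and n=2] by simp

lemma int_bound:
  fixes f g :: "real \<Rightarrow> real"
  assumes "\<forall>y\<in>A. f y \<le> g y" "set_integrable lborel A g" "\<forall>y\<in>A. g y \<ge> 0"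
  shows "set_lebesgue_integral lborel A f \<le> set_lebesgue_integral lborel A g"
proof (cases "set_integrable lborel A f")
  case True
  then show ?thesis using assms by (intro set_integral_mono) auto
next
  case False
  then have "set_lebesgue_integral lborel A f = 0"
    unfolding set_lebesgue_integral_def set_integrable_def by (simp add: not_integrable_integral_eq)
  then show ?thesis using set_int_nonneg[of A g] assms by simp
qed

lemma Lp_norm_nonneg: "Lp_norm t S u \<ge> 0"
  unfolding Lp_norm_def by simp

lemma const_in_Lp:
  fixes B t :: real assumes "B > 0"
  shows "in_Lp t {0<..<B} (\<lambda>_. 1)" "Lp_norm t {0<..<B} (\<lambda>_. 1) \<noteq> 0"
proof -
  have "set_integrable lborel {0<..<B} (\<lambda>x. 1::real)"
    unfolding set_integrable_def using assms by (auto intro!: integrable_real_indicator)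
  then show "in_Lp t {0<..<B} (\<lambda>_. 1)" unfolding in_Lp_def by simp
  have "set_lebesgue_integral lborel {0<..<B} (\<lambda>x. 1::real) = B"
    using assms by (subst set_integral_const) auto
  then show "Lp_norm t {0<..<B} (\<lambda>_. 1) \<noteq> 0" unfolding Lp_norm_def using assms by simp
qed

lemma opnorm_bound:
  fixes B t c :: real and K :: "(real \<Rightarrow> real) \<Rightarrow> real \<Rightarrow> real"
  assumes "B > 0" "c \<ge> 0"
    and bnd: "\<And>u. in_Lp t {0<..<B} u \<Longrightarrow> Lp_norm t {0<..<B} u \<noteq> 0 \<Longrightarrow>
               Lp_norm t {0<..<B} (K u) \<le> c * Lp_norm t {0<..<B} u"
  shows "op_norm t {0<..<B} K ^ n \<le> ereal (c ^ n)"
proof -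
  let ?A = "{ereal (Lp_norm t {0<..<B} (K u) / Lp_norm t {0<..<B} u) | u.
                          in_Lp t {0<..<B} u \<and> Lp_norm t {0<..<B} u \<noteq> 0}"
  have le: "op_norm t {0<..<B} K \<le> ereal c"
    unfolding op_norm_def
  proof (rule Sup_least)
    fix x assume "x \<in> ?A"
    then obtain u where u: "x = ereal (Lp_norm t {0<..<B} (K u) / Lp_norm t {0<..<B} u)"
      "in_Lp t {0<..<B} u" "Lp_norm t {0<..<B} u \<noteq> 0" by blast
    have pos: "Lp_norm t {0<..<B} u > 0" using u(3) Lp_norm_nonneg[of t "{0<..<B}" u] by linarith
    have "Lp_norm t {0<..<B} (K u) / Lp_norm t {0<..<B} u \<le> c"
      using bnd[OF u(2,3)] pos by (simp add: divide_le_eq)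
    then show "x \<le> ereal c" using u(1) by simp
  qed
  have ge: "op_norm t {0<..<B} K \<ge> 0"
  proof -
    have "ereal (Lp_norm t {0<..<B} (K (\<lambda>_. 1)) / Lp_norm t {0<..<B} (\<lambda>_. 1)) \<in> ?A"
      using const_in_Lp[OF assms(1), of t] by blast
    then have "ereal (Lp_norm t {0<..<B} (K (\<lambda>_. 1)) / Lp_norm t {0<..<B} (\<lambda>_. 1)) \<le> op_norm t {0<..<B} K"
      unfolding op_norm_def by (rule Sup_upper)
    moreover have "Lp_norm t {0<..<B} (K (\<lambda>_. 1)) / Lp_norm t {0<..<B} (\<lambda>_. 1) \<ge> 0"
      using Lp_norm_nonneg by simp
    ultimately show ?thesis by (metis ereal_less_eq(5) order_trans zero_ereal_def)
  qed
  obtain r where r: "op_norm t {0<..<B} K = ereal r" using le ge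
    by (cases "op_norm t {0<..<B} K") auto
  then have "0 \<le> r" "r \<le> c" using le ge by auto
  then have "r ^ n \<le> c ^ n" by (intro power_mono) auto
  then show ?thesis using r by simp
qed



lemma kbound:
  fixes Q u :: "real \<Rightarrow> real" and lam B y :: real
  assumes y: "y \<in> {0<..<B}"
  shows "ennreal \<bar>K_op Q lam u y\<bar> \<le> (\<integral>\<^sup>+ z. ennreal (indicator {0..y} z * \<bar>indicator {0<..<B} z * Q z\<bar>
           * \<bar>sin (sqrt lam * (y - z))\<bar> * \<bar>indicator {0<..<B} z * u z\<bar>) \<partial>lborel)"
proof -
  define f where "f = (\<lambda>z. indicator {0..y} z *\<^sub>R (Q z * sin (sqrt lam * (y - z)) * u z))"
  have K: "K_op Q lam u y = integral\<^sup>L lborel f"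
    unfolding K_op_def set_lebesgue_integral_def f_def ..
  have ae: "AE z in lborel. ennreal (norm (f z)) = ennreal (indicator {0..y} z * \<bar>indicator {0<..<B} z * Q z\<bar>
           * \<bar>sin (sqrt lam * (y - z))\<bar> * \<bar>indicator {0<..<B} z * u z\<bar>)"
    using AE_lborel_singleton[of 0]
  proof (rule eventually_mono)
    fix z :: real assume z: "z \<noteq> 0"
    show "ennreal (norm (f z)) = ennreal (indicator {0..y} z * \<bar>indicator {0<..<B} z * Q z\<bar>
           * \<bar>sin (sqrt lam * (y - z))\<bar> * \<bar>indicator {0<..<B} z * u z\<bar>)"
    proof (cases "z \<in> {0..y}")
      case True
      then have "z \<in> {0<..<B}" using z y by auto
      then show ?thesis using True unfolding f_def by (simp add: abs_mult)
    next
      case False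
      then show ?thesis unfolding f_def by simp
    qed
  qed
  show ?thesis
  proof (cases "integrable lborel f")
    case True
    have "ennreal (norm (integral\<^sup>L lborel f)) \<le> (\<integral>\<^sup>+ z. ennreal (norm (f z)) \<partial>lborel)"
      by (rule integral_norm_bound_ennreal[OF True])
    also have "\<dots> = (\<integral>\<^sup>+ z. ennreal (indicator {0..y} z * \<bar>indicator {0<..<B} z * Q z\<bar>
           * \<bar>sin (sqrt lam * (y - z))\<bar> * \<bar>indicator {0<..<B} z * u z\<bar>) \<partial>lborel)"
      by (rule nn_integral_cong_AE[OF ae])
    finally show ?thesis using K by simp
  next
    case False
    then show ?thesis using K by (simp add: not_integrable_integral_eq)
  qed
qed

lemma Lp_from_pw:
  fixes Ku h :: "real \<Rightarrow> real" and t D E B :: real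
  assumes "t > 0" "D \<ge> 0"
    and pw: "\<forall>y\<in>{0<..<B}. \<bar>Ku y\<bar> powr t \<le> D * h y"
    and hi: "set_integrable lborel {0<..<B} h" and hp: "\<forall>y\<in>{0<..<B}. h y \<ge> 0"
    and hE: "set_lebesgue_integral lborel {0<..<B} h \<le> E"
  shows "Lp_norm t {0<..<B} Ku \<le> (D * E) powr (1 / t)"
proof -
  have "set_lebesgue_integral lborel {0<..<B} (\<lambda>y. \<bar>Ku y\<bar> powr t) \<le> set_lebesgue_integral lborel {0<..<B} (\<lambda>y. D * h y)"
    using pw hi hp assms(2) by (intro int_bound) auto
  also have "\<dots> = D * set_lebesgue_integral lborel {0<..<B} h" by simp
  also have "\<dots> \<le> D * E" using hE assms(2) by (rule mult_left_mono)
  finally have le: "set_lebesgue_integral lborel {0<..<B} (\<lambda>y. \<bar>Ku y\<bar> powr t) \<le> D * E" .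
  have "set_lebesgue_integral lborel {0<..<B} (\<lambda>y. \<bar>Ku y\<bar> powr t) \<ge> 0"
    by (rule set_int_nonneg) simp
  then show ?thesis unfolding Lp_norm_def using le assms(1) by (intro powr_mono2) auto
qed

lemma pow_powr_inv:
  fixes c :: real assumes "c \<ge> 0" "n > 0"
  shows "(c ^ n) powr (1 / real n) = c"
proof (cases "c = 0")
  case True then show ?thesis using assms by simp
next
  case False
  then have "c > 0" using assms by simp
  then have "(c ^ n) powr (1 / real n) = (c powr real n) powr (1 / real n)" by (simp add: powr_realpow)
  also have "\<dots> = c" using assms \<open>c > 0\<close> by (simp add: powr_powr)
  finally show ?thesis .
qed



lemma core_setup:
  fixes B :: real and Q Qc :: "real \<Rightarrow> real"
  assumes B: "B > 0" and cQc: "continuous_on {0..B} Qc" and QQ: "\<forall>y\<in>{0<..<B}. Q y = Qc y"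
  shows "(\<lambda>z. indicator {0<..<B} z * Q z) \<in> borel_measurable lborel"
    "set_integrable lborel {0<..<B} (\<lambda>x. \<bar>Q x\<bar> powr 4)"
proof -
  have cQ: "continuous_on {0<..<B} Q"
  proof -
    have "continuous_on {0<..<B} Qc" using cQc by (rule continuous_on_subset) auto
    then show ?thesis using QQ by (metis continuous_on_cong)
  qed
  have "(\<lambda>x. indicator {0<..<B} x *\<^sub>R Q x) \<in> borel_measurable borel"
    by (rule borel_measurable_continuous_on_indicator[OF _ cQ]) simp
  then show Qm: "(\<lambda>z. indicator {0<..<B} z * Q z) \<in> borel_measurable lborel" by simp
  obtain M where M: "\<forall>x\<in>{0..B}. norm (Qc x) \<le> M"
    using compact_imp_bounded[OF compact_continuous_image[OF cQc compact_Icc]]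
    unfolding bounded_iff by auto
  define M' where "M' = max M 0"
  have bnd: "\<bar>indicator {0<..<B} z * Q z\<bar> \<le> M'" for z
  proof (cases "z \<in> {0<..<B}")
    case True
    then have "z \<in> {0..B}" "Q z = Qc z" using QQ by auto
    then have "\<bar>Q z\<bar> \<le> M" using M by auto
    then show ?thesis using True unfolding M'_def by simp
  next
    case False then show ?thesis unfolding M'_def by simp
  qed
  have eq: "(\<lambda>x. indicator {0<..<B} x *\<^sub>R \<bar>Q x\<bar> powr 4) = (\<lambda>x. (indicator {0<..<B} x * Q x) ^ 4)"
    by (auto simp: indicator_def abs_powr4)
  have "integrable lborel (\<lambda>x. (indicator {0<..<B} x * Q x) ^ 4)"
  proof (rule Bochner_Integration.integrable_bound)
    show "integrable lborel (\<lambda>x. M' ^ 4 * indicator {0<..<B} x)"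
      using B by (intro integrable_mult_right integrable_real_indicator) auto
    show "(\<lambda>x. (indicator {0<..<B} x * Q x) ^ 4) \<in> borel_measurable lborel" using Qm by measurable
    show "AE x in lborel. norm ((indicator {0<..<B} x * Q x) ^ 4) \<le> norm (M' ^ 4 * indicator {0<..<B} x)"
    proof (rule AE_I2)
      fix x
      show "norm ((indicator {0<..<B} x * Q x) ^ 4) \<le> norm (M' ^ 4 * indicator {0<..<B} x)"
      proof (cases "x \<in> {0<..<B}")
        case True
        have "\<bar>Q x\<bar> ^ 4 \<le> M' ^ 4" using bnd[of x] True by (intro power_mono) auto
        then show ?thesis using True by (simp add: power_abs)
      next
        case False then show ?thesis by simp
      qed
    qed
  qed
  then show "set_integrable lborel {0<..<B} (\<lambda>x. \<bar>Q x\<bar> powr 4)"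
    unfolding set_integrable_def eq .
qed

lemma set_int_ennreal:
  fixes f :: "real \<Rightarrow> real"
  assumes "set_integrable lborel A f" "\<forall>x\<in>A. f x \<ge> 0"
  shows "(\<integral>\<^sup>+ x. ennreal (indicator A x * f x) \<partial>lborel) = ennreal (set_lebesgue_integral lborel A f)"
proof -
  have "(\<integral>\<^sup>+ x. ennreal (indicator A x *\<^sub>R f x) \<partial>lborel) = ennreal (integral\<^sup>L lborel (\<lambda>x. indicator A x *\<^sub>R f x))"
    using assms unfolding set_integrable_def
    by (intro nn_integral_eq_integral) (auto simp: indicator_def)
  then show ?thesis unfolding set_lebesgue_integral_def by simp
qed



lemma ut_meas:
  fixes u :: "real \<Rightarrow> real"
  assumes "u \<in> borel_measurable (restrict_space lborel {0<..<B})"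
  shows "(\<lambda>z. indicator {0<..<B} z * u z) \<in> borel_measurable lborel"
  using assms borel_measurable_restrict_space_iff[of "{0<..<B}" lborel u] by simp

lemma sqrt_pow3: "lam \<ge> 0 \<Longrightarrow> sqrt lam ^ 3 = lam powr (3/2)"
proof -
  assume "lam \<ge> 0"
  then have "sqrt lam = lam powr (1/2)" by (simp add: powr_half_sqrt)
  then have "sqrt lam ^ 3 = lam powr (1/2) * lam powr (1/2) * lam powr (1/2)" by (simp add: power3_eq_cube)
  also have "\<dots> = lam powr (1/2 + 1/2 + 1/2)" by (simp only: powr_add)
  also have "\<dots> = lam powr (3/2)" by simp
  finally show ?thesis .
qed

lemma core4:
  fixes B lam :: real and Q :: "real \<Rightarrow> real"
  assumes B: "B > 0" and lam: "lam > 0"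
    and Qm: "(\<lambda>z. indicator {0<..<B} z * Q z) \<in> borel_measurable lborel"
    and Qi: "set_integrable lborel {0<..<B} (\<lambda>x. \<bar>Q x\<bar> powr 4)"
  shows "op_norm 4 {0<..<B} (K_op Q lam) ^ 4
     \<le> ereal ((B^3 / 12 + 5 * B / (32 * lam) + 5 / (32 * lam powr (3/2))) * Lp_norm 4 {0<..<B} Q ^ 4)"
proof -
  define A where "A = {0<..<B::real}"
  define a where "a = sqrt lam"
  have a: "a > 0" unfolding a_def using lam by simp
  define C4 where "C4 = B^3 / 12 + 5 * B / (32 * lam) + 5 / (32 * lam powr (3/2))"
  have C4: "C4 \<ge> 0" unfolding C4_def using B lam by (intro add_nonneg_nonneg) auto
  define IQ where "IQ = set_lebesgue_integral lborel A (\<lambda>x. \<bar>Q x\<bar> powr 4)"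
  have IQ: "IQ \<ge> 0" unfolding IQ_def by (rule set_int_nonneg) simp
  have NQ: "Lp_norm 4 A Q = IQ powr (1/4)" unfolding Lp_norm_def IQ_def by simp
  define c where "c = C4 powr (1/4) * IQ powr (1/4)"
  have c: "c \<ge> 0" unfolding c_def by simp
  have eIQ: "(\<integral>\<^sup>+ x. ennreal (indicator A x * \<bar>Q x\<bar> powr 4) \<partial>lborel) = ennreal IQ"
    unfolding IQ_def using Qi unfolding A_def by (intro set_int_ennreal) auto
  have h_int: "set_integrable lborel A (\<lambda>y. (y/2 - sin (2*a*y) / (4*a))^2)"
  proof -
    have "set_integrable lborel {0..B} (\<lambda>y. (y/2 - sin (2*a*y) / (4*a))^2)"
      by (rule borel_integrable_atLeastAtMost') (intro continuous_intros, use a in auto)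
    then show ?thesis unfolding A_def by (rule set_integrable_subset) auto
  qed
  have h_val: "set_lebesgue_integral lborel A (\<lambda>y. (y/2 - sin (2*a*y) / (4*a))^2) \<le> C4"
  proof -
    have "set_lebesgue_integral lborel A (\<lambda>y. (y/2 - sin (2*a*y) / (4*a))^2)
        = integral A (\<lambda>y. (y/2 - sin (2*a*y) / (4*a))^2)"
      by (rule set_borel_integral_eq_integral(2)[OF h_int])
    also have "\<dots> = integral {0..B} (\<lambda>y. (y/2 - sin (2*a*y) / (4*a))^2)"
      unfolding A_def by (simp add: integral_open_interval_real)
    also have "\<dots> = B^3/12 + B * cos (2*a*B) / (8*a^2) - sin (2*a*B) / (16*a^3) + B / (32*a^2) - sin (4*a*B) / (128*a^3)"
      using S2_integral[OF a, of B] B by (simp add: integral_unique)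
    also have "\<dots> \<le> B^3/12 + 5 * B / (32 * a^2) + 5 / (32 * a^3)"
      using S2_bound[OF a, of B] B by simp
    also have "\<dots> = C4" unfolding C4_def a_def using lam by (simp add: sqrt_pow3)
    finally show ?thesis .
  qed
  have "op_norm 4 A (K_op Q lam) ^ 4 \<le> ereal (c ^ 4)"
    unfolding A_def
  proof (rule opnorm_bound[OF B c])
    fix u assume u: "in_Lp 4 {0<..<B} u" "Lp_norm 4 {0<..<B} u \<noteq> 0"
    have um: "(\<lambda>z. indicator A z * u z) \<in> borel_measurable lborel"
      using u(1) unfolding in_Lp_def A_def by (intro ut_meas) auto
    have Ui: "set_integrable lborel A (\<lambda>x. \<bar>u x\<bar> powr 4)" using u(1) unfolding in_Lp_def A_def by auto
    define IU where "IU = set_lebesgue_integral lborel A (\<lambda>x. \<bar>u x\<bar> powr 4)"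
    have IU: "IU \<ge> 0" unfolding IU_def by (rule set_int_nonneg) simp
    have NU: "Lp_norm 4 A u = IU powr (1/4)" unfolding Lp_norm_def IU_def by simp
    have eIU: "(\<integral>\<^sup>+ x. ennreal (indicator A x * \<bar>u x\<bar> powr 4) \<partial>lborel) = ennreal IU"
      unfolding IU_def using Ui by (intro set_int_ennreal) auto
    have pw: "\<forall>y\<in>A. \<bar>K_op Q lam u y\<bar> powr 4 \<le> (IQ * IU) * (y/2 - sin (2*a*y) / (4*a))^2"
    proof
      fix y assume y: "y \<in> A"
      define X where "X = (\<integral>\<^sup>+ z. ennreal (indicator {0..y} z * \<bar>indicator A z * Q z\<bar>
           * \<bar>sin (a * (y - z))\<bar> * \<bar>indicator A z * u z\<bar>) \<partial>lborel)"
      have k: "ennreal \<bar>K_op Q lam u y\<bar> \<le> X"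
        using kbound[of y B Q lam u] y unfolding X_def A_def a_def by simp
      have p4: "X^4 \<le> (\<integral>\<^sup>+ z. ennreal (indicator {0..y} z * (indicator A z * Q z) ^ 4) \<partial>lborel)
          * (\<integral>\<^sup>+ z. ennreal (indicator {0..y} z * (indicator A z * u z) ^ 4) \<partial>lborel)
          * ennreal ((y/2 - sin (2*a*y) / (4*a))^2)"
        unfolding X_def using y Qm um a unfolding A_def
        by (intro pw4) auto
      have m1: "(\<integral>\<^sup>+ z. ennreal (indicator {0..y} z * (indicator A z * f z) ^ 4) \<partial>lborel)
           \<le> (\<integral>\<^sup>+ x. ennreal (indicator A x * \<bar>f x\<bar> powr 4) \<partial>lborel)" for f :: "real \<Rightarrow> real"
      proof (rule nn_integral_mono)
        fix z
        show "ennreal (indicator {0..y} z * (indicator A z * f z) ^ 4) \<le> ennreal (indicator A z * \<bar>f z\<bar> powr 4)"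
        proof (cases "z \<in> A")
          case True
          have "indicator {0..y} z * f z ^ 4 \<le> f z ^ 4"
            by (cases "z \<in> {0..y}") auto
          then show ?thesis using True by (auto intro!: ennreal_leI simp: abs_powr4)
        next
          case False then show ?thesis by simp
        qed
      qed
      have "ennreal \<bar>K_op Q lam u y\<bar> ^ 4 \<le> X ^ 4" by (rule power_mono[OF k]) simp
      also have "\<dots> \<le> ennreal IQ * ennreal IU * ennreal ((y/2 - sin (2*a*y) / (4*a))^2)"
      proof -
        have "(\<integral>\<^sup>+ z. ennreal (indicator {0..y} z * (indicator A z * Q z) ^ 4) \<partial>lborel)
          * (\<integral>\<^sup>+ z. ennreal (indicator {0..y} z * (indicator A z * u z) ^ 4) \<partial>lborel)
          \<le> ennreal IQ * ennreal IU"
          using m1[of Q] m1[of u] unfolding eIQ eIU by (intro mult_mono) auto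
        then have "(\<integral>\<^sup>+ z. ennreal (indicator {0..y} z * (indicator A z * Q z) ^ 4) \<partial>lborel)
          * (\<integral>\<^sup>+ z. ennreal (indicator {0..y} z * (indicator A z * u z) ^ 4) \<partial>lborel)
          * ennreal ((y/2 - sin (2*a*y) / (4*a))^2)
          \<le> ennreal IQ * ennreal IU * ennreal ((y/2 - sin (2*a*y) / (4*a))^2)"
          by (rule mult_right_mono) simp
        with p4 show ?thesis by (rule order_trans)
      qed
      also have "\<dots> = ennreal (IQ * IU * (y/2 - sin (2*a*y) / (4*a))^2)"
        using IQ IU by (simp add: ennreal_mult)
      finally have "ennreal (\<bar>K_op Q lam u y\<bar> ^ 4) \<le> ennreal (IQ * IU * (y/2 - sin (2*a*y) / (4*a))^2)"
        by (simp add: ennreal_power)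
      then have "\<bar>K_op Q lam u y\<bar> ^ 4 \<le> IQ * IU * (y/2 - sin (2*a*y) / (4*a))^2"
        using IQ IU by (subst (asm) ennreal_le_iff) auto
      then show "\<bar>K_op Q lam u y\<bar> powr 4 \<le> (IQ * IU) * (y/2 - sin (2*a*y) / (4*a))^2"
        by (simp add: abs_powr4 power_abs)
    qed
    have "Lp_norm 4 A (K_op Q lam u) \<le> ((IQ * IU) * C4) powr (1/4)"
      using pw h_int h_val IQ IU unfolding A_def
      by (intro Lp_from_pw[where h="\<lambda>y. (y/2 - sin (2*a*y) / (4*a))^2"]) auto
    also have "\<dots> = c * Lp_norm 4 A u"
      unfolding c_def NU using IQ IU C4 by (simp add: powr_mult)
    finally show "Lp_norm 4 {0<..<B} (K_op Q lam u) \<le> c * Lp_norm 4 {0<..<B} u" unfolding A_def .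
  qed
  also have "c ^ 4 = C4 * Lp_norm 4 A Q ^ 4"
  proof -
    have "(C4 powr (1/4)) ^ 4 = C4" using powr_inv_pow[OF C4, of 4] by simp
    moreover have "(IQ powr (1/4)) ^ 4 = IQ" using powr_inv_pow[OF IQ, of 4] by simp
    ultimately show ?thesis unfolding c_def NQ by (simp add: power_mult_distrib)
  qed
  finally show ?thesis unfolding A_def C4_def .
qed



lemma core2:
  fixes B lam :: real and Q :: "real \<Rightarrow> real"
  assumes B: "B > 0" and lam: "lam > 0"
    and Qm: "(\<lambda>z. indicator {0<..<B} z * Q z) \<in> borel_measurable lborel"
  shows "op_norm 2 {0<..<B} (K_op Q lam) ^ 2 \<le> ereal (B^2 / 4) * Linf_norm {0<..<B} Q ^ 2"
proof (cases "Linf_norm {0<..<B} Q")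
  case PInf
  then show ?thesis using B by (simp add: power2_eq_square)
next
  case MInf
  then show ?thesis using B by (simp add: power2_eq_square)
next
  case (real mr)
  define A where "A = {0<..<B::real}"
  define a where "a = sqrt lam"
  have a: "a > 0" unfolding a_def using lam by simp
  define mp where "mp = max mr 0"
  have mp: "mp \<ge> 0" unfolding mp_def by simp
  have "AE x in restrict_space lborel A. ereal \<bar>Q x\<bar> \<le> esssup (restrict_space lborel A) (\<lambda>x. ereal \<bar>Q x\<bar>)"
    by (rule esssup_AE)
  then have "AE x in restrict_space lborel A. ereal \<bar>Q x\<bar> \<le> ereal mr"
    using real unfolding Linf_norm_def A_def by simp
  then have "AE x in lborel. x \<in> A \<longrightarrow> ereal \<bar>Q x\<bar> \<le> ereal mr"
    unfolding A_def by (subst (asm) AE_restrict_space_iff) auto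
  then have AEb: "AE z in lborel. \<bar>indicator A z * Q z\<bar> \<le> mp"
    by (rule eventually_mono) (auto simp: mp_def indicator_def)
  define c where "c = mp * B / 2"
  have c: "c \<ge> 0" unfolding c_def using mp B by simp
  have h_int: "set_integrable lborel A (\<lambda>y. y/2 - sin (2*a*y) / (4*a))"
  proof -
    have "set_integrable lborel {0..B} (\<lambda>y. y/2 - sin (2*a*y) / (4*a))"
      by (rule borel_integrable_atLeastAtMost') (intro continuous_intros, use a in auto)
    then show ?thesis unfolding A_def by (rule set_integrable_subset) auto
  qed
  have h_val: "set_lebesgue_integral lborel A (\<lambda>y. y/2 - sin (2*a*y) / (4*a)) \<le> B^2/4"
  proof -
    have "set_lebesgue_integral lborel A (\<lambda>y. y/2 - sin (2*a*y) / (4*a))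
        = integral A (\<lambda>y. y/2 - sin (2*a*y) / (4*a))"
      by (rule set_borel_integral_eq_integral(2)[OF h_int])
    also have "\<dots> = integral {0..B} (\<lambda>y. y/2 - sin (2*a*y) / (4*a))"
      unfolding A_def by (simp add: integral_open_interval_real)
    also have "\<dots> = B^2/4 + cos (2*a*B) / (8*a^2) - 1/(8*a^2)"
      using S_integral[OF a, of B] B by (simp add: integral_unique)
    also have "\<dots> \<le> B^2/4"
    proof -
      have "cos (2*a*B) / (8*a^2) \<le> 1/(8*a^2)" using a by (intro divide_right_mono) auto
      then show ?thesis by simp
    qed
    finally show ?thesis .
  qed
  have "op_norm 2 A (K_op Q lam) ^ 2 \<le> ereal (c ^ 2)"
    unfolding A_def
  proof (rule opnorm_bound[OF B c])
    fix u assume u: "in_Lp 2 {0<..<B} u" "Lp_norm 2 {0<..<B} u \<noteq> 0"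
    have um: "(\<lambda>z. indicator A z * u z) \<in> borel_measurable lborel"
      using u(1) unfolding in_Lp_def A_def by (intro ut_meas) auto
    have Ui: "set_integrable lborel A (\<lambda>x. \<bar>u x\<bar> powr 2)" using u(1) unfolding in_Lp_def A_def by auto
    define IU where "IU = set_lebesgue_integral lborel A (\<lambda>x. \<bar>u x\<bar> powr 2)"
    have IU: "IU \<ge> 0" unfolding IU_def by (rule set_int_nonneg) simp
    have NU: "Lp_norm 2 A u = IU powr (1/2)" unfolding Lp_norm_def IU_def by simp
    have eIU: "(\<integral>\<^sup>+ x. ennreal (indicator A x * \<bar>u x\<bar> powr 2) \<partial>lborel) = ennreal IU"
      unfolding IU_def using Ui by (intro set_int_ennreal) auto
    have pw: "\<forall>y\<in>A. \<bar>K_op Q lam u y\<bar> powr 2 \<le> (mp^2 * IU) * (y/2 - sin (2*a*y) / (4*a))"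
    proof
      fix y assume y: "y \<in> A"
      define X where "X = (\<integral>\<^sup>+ z. ennreal (indicator {0..y} z * \<bar>indicator A z * Q z\<bar>
           * \<bar>sin (a * (y - z))\<bar> * \<bar>indicator A z * u z\<bar>) \<partial>lborel)"
      define g where "g = (\<lambda>z. indicator {0..y} z * \<bar>sin (a * (y - z))\<bar> * \<bar>indicator A z * u z\<bar>)"
      have gm: "g \<in> borel_measurable lborel" unfolding g_def using um by measurable
      define Y where "Y = (\<integral>\<^sup>+ z. ennreal (g z) \<partial>lborel)"
      have k: "ennreal \<bar>K_op Q lam u y\<bar> \<le> X"
        using kbound[of y B Q lam u] y unfolding X_def A_def a_def by simp
      have "X \<le> (\<integral>\<^sup>+ z. ennreal (mp * g z) \<partial>lborel)"
        unfolding X_def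
      proof (rule nn_integral_mono_AE)
        show "AE z in lborel. ennreal (indicator {0..y} z * \<bar>indicator A z * Q z\<bar> * \<bar>sin (a * (y - z))\<bar> * \<bar>indicator A z * u z\<bar>)
             \<le> ennreal (mp * g z)"
          using AEb
        proof (rule eventually_mono)
          fix z assume z: "\<bar>indicator A z * Q z\<bar> \<le> mp"
          have "g z \<ge> 0" unfolding g_def by simp
          then have "\<bar>indicator A z * Q z\<bar> * g z \<le> mp * g z" using z by (rule mult_right_mono[rotated])
          then show "ennreal (indicator {0..y} z * \<bar>indicator A z * Q z\<bar> * \<bar>sin (a * (y - z))\<bar> * \<bar>indicator A z * u z\<bar>)
             \<le> ennreal (mp * g z)"
            unfolding g_def by (intro ennreal_leI) (simp add: mult_ac)
        qed
      qed
      also have "\<dots> = ennreal mp * Y"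
      proof -
        have "(\<integral>\<^sup>+ z. ennreal (mp * g z) \<partial>lborel) = (\<integral>\<^sup>+ z. ennreal mp * ennreal (g z) \<partial>lborel)"
          using mp by (intro nn_integral_cong) (simp add: ennreal_mult')
        also have "\<dots> = ennreal mp * Y" unfolding Y_def using gm by (intro nn_integral_cmult) simp
        finally show ?thesis .
      qed
      finally have XY: "X \<le> ennreal mp * Y" .
      have p2: "Y^2 \<le> (\<integral>\<^sup>+ z. ennreal (indicator {0..y} z * (indicator A z * u z) ^ 2) \<partial>lborel)
          * ennreal (y/2 - sin (2*a*y) / (4*a))"
        unfolding Y_def g_def using y um a unfolding A_def
        by (intro pw2) auto
      have m1: "(\<integral>\<^sup>+ z. ennreal (indicator {0..y} z * (indicator A z * u z) ^ 2) \<partial>lborel)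
           \<le> (\<integral>\<^sup>+ x. ennreal (indicator A x * \<bar>u x\<bar> powr 2) \<partial>lborel)"
      proof (rule nn_integral_mono)
        fix z
        show "ennreal (indicator {0..y} z * (indicator A z * u z) ^ 2) \<le> ennreal (indicator A z * \<bar>u z\<bar> powr 2)"
        proof (cases "z \<in> A")
          case True
          have "indicator {0..y} z * u z ^ 2 \<le> u z ^ 2"
            by (cases "z \<in> {0..y}") auto
          then show ?thesis using True by (auto intro!: ennreal_leI simp: abs_powr2)
        next
          case False then show ?thesis by simp
        qed
      qed
      have S0: "y/2 - sin (2*a*y) / (4*a) \<ge> 0" using S_nonneg[OF a, of y] y unfolding A_def by simp
      have "ennreal \<bar>K_op Q lam u y\<bar> ^ 2 \<le> X ^ 2" by (rule power_mono[OF k]) simp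
      also have "\<dots> \<le> (ennreal mp * Y) ^ 2" by (rule power_mono[OF XY]) simp
      also have "\<dots> = ennreal mp ^ 2 * Y ^ 2" by (simp add: power_mult_distrib)
      also have "\<dots> \<le> ennreal mp ^ 2 * (ennreal IU * ennreal (y/2 - sin (2*a*y) / (4*a)))"
      proof (rule mult_left_mono)
        show "Y^2 \<le> ennreal IU * ennreal (y/2 - sin (2*a*y) / (4*a))"
          using p2 m1 unfolding eIU by (meson mult_right_mono order_trans zero_le)
      qed simp
      also have "\<dots> = ennreal (mp^2 * IU * (y/2 - sin (2*a*y) / (4*a)))"
        using mp IU S0 by (simp add: ennreal_mult ennreal_power mult.assoc)
      finally have "ennreal (\<bar>K_op Q lam u y\<bar> ^ 2) \<le> ennreal (mp^2 * IU * (y/2 - sin (2*a*y) / (4*a)))"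
        by (simp add: ennreal_power)
      then have "\<bar>K_op Q lam u y\<bar> ^ 2 \<le> mp^2 * IU * (y/2 - sin (2*a*y) / (4*a))"
        using IU S0 by (subst (asm) ennreal_le_iff) auto
      then show "\<bar>K_op Q lam u y\<bar> powr 2 \<le> (mp^2 * IU) * (y/2 - sin (2*a*y) / (4*a))"
        by (simp add: abs_powr2)
    qed
    have hp: "\<forall>y\<in>A. y/2 - sin (2*a*y) / (4*a) \<ge> 0" using S_nonneg[OF a] unfolding A_def by auto
    have "Lp_norm 2 A (K_op Q lam u) \<le> ((mp^2 * IU) * (B^2/4)) powr (1/2)"
      using pw h_int h_val IU hp unfolding A_def
      by (intro Lp_from_pw[where h="\<lambda>y. y/2 - sin (2*a*y) / (4*a)"]) auto
    also have "\<dots> = c * Lp_norm 2 A u"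
    proof -
      have "(mp^2) powr (1/2) = mp" using pow_powr_inv[OF mp, of 2] by simp
      moreover have "(B^2/4) powr (1/2) = B/2"
        using pow_powr_inv[of "B/2" 2] B by (simp add: power_divide)
      moreover have "((mp^2 * IU) * (B^2/4)) powr (1/2) = ((mp^2) powr (1/2) * IU powr (1/2)) * (B^2/4) powr (1/2)"
        using IU mp by (simp only: powr_mult zero_le_power2 mult_nonneg_nonneg divide_nonneg_pos zero_less_numeral)
      ultimately show ?thesis unfolding c_def NU by simp
    qed
    finally show "Lp_norm 2 {0<..<B} (K_op Q lam u) \<le> c * Lp_norm 2 {0<..<B} u" unfolding A_def .
  qed
  also have "ereal (c ^ 2) \<le> ereal (B^2 / 4) * Linf_norm {0<..<B} Q ^ 2"
  proof -
    have "mp^2 \<le> mr^2" unfolding mp_def by (cases "mr \<ge> 0") (auto simp: max_def)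
    then have "mp^2 * B^2 \<le> mr^2 * B^2" by (rule mult_right_mono) simp
    then have "c^2 \<le> B^2/4 * mr^2" unfolding c_def by (simp add: power_mult_distrib power_divide mult.commute)
    then show ?thesis using real by simp
  qed
  finally show ?thesis unfolding A_def .
qed


theorem lemma2p1:
  fixes L :: real and p w q :: "real \<Rightarrow> real"
  assumes "L > 0"
    and "C2_on 0 L p" and "C2_on 0 L w"
    and "\<forall>x\<in>{0..L}. p x > 0" and "\<forall>x\<in>{0..L}. w x > 0"
    and "Linf_norm {0<..<L} (\<lambda>x. 1 / p x) < \<infinity>"
    and "Linf_norm {0<..<L} (\<lambda>x. 1 / w x) < \<infinity>"
    and "continuous_on {0..L} q" and "\<forall>x\<in>{0..L}. q x \<ge> 0"
  defines "B \<equiv> integral {0..L} (\<lambda>s. sqrt (w s / p s))"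
    and "Q \<equiv> liou_Q L p w q"
  shows "\<forall>lam::real. lam > 0 \<longrightarrow>
           op_norm 2 {0<..<B} (K_op Q lam) ^ 2 \<le> ereal (B^2 / 4) * Linf_norm {0<..<B} Q ^ 2
         \<and> op_norm 4 {0<..<B} (K_op Q lam) ^ 4
             \<le> ereal ((B^3 / 12 + 5 * B / (32 * lam) + 5 / (32 * lam powr (3/2)))
                       * Lp_norm 4 {0<..<B} Q ^ 4)"
proof -
  note qr = Q_regular[OF assms(1,2,3,4,5,8), folded B_def]
  have Bpos: "B > 0" using qr(1) .
  obtain Qc where Qc: "continuous_on {0..B} Qc" "\<forall>y\<in>{0<..<B}. Q y = Qc y"
    using qr(2) unfolding Q_def by blast
  note cs = core_setup[OF Bpos Qc]
  show ?thesis
  proof (intro allI impI conjI)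
    fix lam :: real assume lam: "lam > 0"
    show "op_norm 2 {0<..<B} (K_op Q lam) ^ 2 \<le> ereal (B^2 / 4) * Linf_norm {0<..<B} Q ^ 2"
      by (rule core2[OF Bpos lam cs(1)])
    show "op_norm 4 {0<..<B} (K_op Q lam) ^ 4
             \<le> ereal ((B^3 / 12 + 5 * B / (32 * lam) + 5 / (32 * lam powr (3/2)))
                       * Lp_norm 4 {0<..<B} Q ^ 4)"
      by (rule core4[OF Bpos lam cs(1) cs(2)])
  qed
qed

end
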